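(* For every positive integer $n$ and every $w\in\mathfrak{H}$, $S_\hbar^t\bigl(\rho_{n,t}^{(\hbar)}(w)\bigr)=\rho_{n,0}^{(\hbar)}(w)$.
   Context: Let $\hbar,t$ be formal variables and $\mathfrak{H}=\mathbb{Q}[\hbar,t]\langle x,y\rangle$; $\mathfrak{H}^1=\mathbb{Q}[\hbar,t]+\mathfrak{H}y$, $z_j=x^{j-1}y$. Let $z_i\circ_+ z_j=z_{i+j}+\hbar z_{i+j-1}$ on the $\mathbb{Q}[\hbar,t]$-span of the $z_j$, extended to an action on $\mathfrak{H}^1$ by $z_i\circ_+1=0$, $z_i\circ_+(z_jw)=(z_i\circ_+z_j)w$. Let $S_\hbar^t:\mathfrak{H}^1\to\mathfrak{H}^1$ be the $\mathbb{Q}[\hbar,t]$-linear map with $S_\hbar^t(1)=1$, $S_\hbar^t(z_kw)=z_kS_\hbar^t(w)+t\,z_k\circ_+S_\hbar^t(w)$ for words $w\in\mathfrak{H}^1$. Let $\gamma_\hbar^t$ be the algebra automorphism of $\mathfrak{H}$ with $\gamma_\hbar^t(x)=x$, $\gamma_\hbar^t(y)=tx+y+\hbar t$. For $n\ge1$, make $\mathfrak{H}^{\otimes(n+1)}$ (tensor over $\mathbb{Q}[\hbar,t]$) an $\mathfrak{H}$-bimodule by $a\diamond(w_1\otimes\cdots\otimes w_{n+1})=w_1\otimes\cdots\otimes w_n\otimes aw_{n+1}$ and $(w_1\otimes\cdots\otimes w_{n+1})\diamond b=w_1b\otimes w_2\otimes\cdots\otimes w_{n+1}$. Let $\mathcal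 C_{n,t}^{(\hbar)}:\mathfrak{H}\to\mathfrak{H}^{\otimes(n+1)}$ be the $\mathbb{Q}[\hbar,t]$-linear map with $\mathcal C_{n,t}^{(\hbar)}(x)=-\mathcal C_{n,t}^{(\hbar)}(y)=x\otimes((1-t)x+y-\hbar t)^{\otimes(n-1)}\otimes y$ and $\mathcal C_{n,t}^{(\hbar)}(vw)=\mathcal C_{n,t}^{(\hbar)}(v)\diamond(\gamma_\hbar^t)^{-1}(w)+(\gamma_\hbar^t)^{-1}(v)\diamond\mathcal C_{n,t}^{(\hbar)}(w)$ (so $\mathcal C_{n,t}^{(\hbar)}(1)=0$). Let $M_n:\mathfrak{H}^{\otimes(n+1)}\to\mathfrak{H}$ be multiplication $w_1\otimes\cdots\otimes w_{n+1}\mapsto w_1\cdots w_{n+1}$, and $\rho_{n,t}^{(\hbar)}=M_n\circ\mathcal C_{n,t}^{(\hbar)}$; $\rho_{n,0}^{(\hbar)}$ denotes the same map with $t=0$. The map $\rho_{n,t}^{(\hbar)}$ takes values in $\mathfrak{H}y\subset\mathfrak{H}^1$, so $S_\hbar^t$ can be applied. *)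

theory Defs
  imports "HOL-Computational_Algebra.Polynomial"
begin

section \<open>Coefficient ring Q[hbar,t] = (Q[hbar])[t]\<close>

type_synonym R = "rat poly poly"

definition hb :: R where "hb = [:[:0, 1:]:]"
definition tt :: R where "tt = [:0, 1:]"

section \<open>The free algebra H = R<x,y> as coefficient functions on words\<close>

datatype letter = X | Y

type_synonym word = "letter list"
type_synonym nc = "word \<Rightarrow> R"          (* elements of H (finite support) *)
type_synonym tens = "word list \<Rightarrow> R"    (* elements of H^{\<otimes>k}, k = length of index list *)

definition nc_zero :: nc where "nc_zero = (\<lambda>_. 0)"
definition nc_add :: "nc \<Rightarrow> nc \<Rightarrow> nc" where "nc_add f g = (\<lambda>w. f w + g w)"
definition nc_smult :: "R \<Rightarrow> nc \<Rightarrow> nc" where "nc_smult c f = (\<lambda>w. c * f w)"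
definition mono :: "word \<Rightarrow> nc" where "mono u = (\<lambda>w. if w = u then 1 else 0)"

definition nc_mult :: "nc \<Rightarrow> nc \<Rightarrow> nc" where
  "nc_mult f g = (\<lambda>w. \<Sum>i\<le>length w. f (take i w) * g (drop i w))"

definition nc_supp :: "nc \<Rightarrow> word set" where "nc_supp f = {u. f u \<noteq> 0}"

definition lin :: "(word \<Rightarrow> nc) \<Rightarrow> nc \<Rightarrow> nc" where
  "lin L f = (\<lambda>w. \<Sum>u\<in>nc_supp f. f u * L u w)"

definition xx :: nc where "xx = mono [X]"
definition yy :: nc where "yy = mono [Y]"
definition one :: nc where "one = mono []"

definition zw :: "nat \<Rightarrow> word" where "zw k = replicate (k - 1) X @ [Y]"

text \<open>circ_aux i k w: z_i \<circ>_+ (x^k w); on a word z_j w' this is (z_(i+j) + hbar z_(i+j-1)) w';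
  on the empty word it is 0.\<close>
primrec circ_aux :: "nat \<Rightarrow> nat \<Rightarrow> word \<Rightarrow> nc" where
  "circ_aux i k [] = nc_zero"
| "circ_aux i k (a # w) = (case a of
      X \<Rightarrow> circ_aux i (Suc k) w
    | Y \<Rightarrow> nc_add (mono (zw (i + Suc k) @ w)) (nc_smult hb (mono (zw (i + k) @ w))))"

definition circ :: "nat \<Rightarrow> nc \<Rightarrow> nc" where "circ i f = lin (circ_aux i 0) f"

text \<open>S_aux tau k w = S^tau(x^k w): S(1) = 1, S(z_k w) = z_k S(w) + tau z_k \<circ>_+ S(w)
  (words outside H^1 are sent to 0; they never occur in the statement).\<close>
primrec S_aux :: "R \<Rightarrow> nat \<Rightarrow> word \<Rightarrow> nc" where
  "S_aux \<tau> k [] = (if k = 0 then one else nc_zero)"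
| "S_aux \<tau> k (a # w) = (case a of
      X \<Rightarrow> S_aux \<tau> (Suc k) w
    | Y \<Rightarrow> nc_add (nc_mult (mono (zw (Suc k))) (S_aux \<tau> 0 w))
                  (nc_smult \<tau> (circ (Suc k) (S_aux \<tau> 0 w))))"

definition S_map :: "R \<Rightarrow> nc \<Rightarrow> nc" where "S_map \<tau> f = lin (S_aux \<tau> 0) f"

text \<open>(gamma^tau)^(-1) is the algebra automorphism with x \<mapsto> x, y \<mapsto> y - tau x - hbar tau,
  the inverse of gamma^tau : x \<mapsto> x, y \<mapsto> tau x + y + hbar tau.\<close>
definition gamma_inv_letter :: "R \<Rightarrow> letter \<Rightarrow> nc" where
  "gamma_inv_letter \<tau> a = (case a of X \<Rightarrow> xx
     | Y \<Rightarrow> (\<lambda>w. yy w - \<tau> * xx w - hb * \<tau> * one w))"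

definition gamma_inv_word :: "R \<Rightarrow> word \<Rightarrow> nc" where
  "gamma_inv_word \<tau> w = foldr (\<lambda>a acc. nc_mult (gamma_inv_letter \<tau> a) acc) w one"

definition tens_zero :: tens where "tens_zero = (\<lambda>_. 0)"
definition tens_add :: "tens \<Rightarrow> tens \<Rightarrow> tens" where "tens_add S T = (\<lambda>ws. S ws + T ws)"

definition tens_of :: "nc list \<Rightarrow> tens" where
  "tens_of fs = (\<lambda>ws. if length ws = length fs
                       then (\<Prod>i<length fs. (fs ! i) (ws ! i)) else 0)"

text \<open>a \<diamond> (w_1 \<otimes> ... \<otimes> w_(n+1)) = w_1 \<otimes> ... \<otimes> a w_(n+1)\<close>
definition lmod :: "nc \<Rightarrow> tens \<Rightarrow> tens" where
  "lmod a T = (\<lambda>ws. if ws = [] then 0 else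
      (\<Sum>i\<le>length (last ws). a (take i (last ws)) * T (butlast ws @ [drop i (last ws)])))"

text \<open>(w_1 \<otimes> ... \<otimes> w_(n+1)) \<diamond> b = w_1 b \<otimes> w_2 \<otimes> ... \<otimes> w_(n+1)\<close>
definition rmod :: "tens \<Rightarrow> nc \<Rightarrow> tens" where
  "rmod T b = (\<lambda>ws. case ws of [] \<Rightarrow> 0
      | w1 # rest \<Rightarrow> (\<Sum>i\<le>length w1. T (take i w1 # rest) * b (drop i w1)))"

definition C_gen :: "nat \<Rightarrow> R \<Rightarrow> tens" where
  "C_gen n \<tau> = tens_of ([xx] @ replicate (n - 1)
        (\<lambda>w. (1 - \<tau>) * xx w + yy w - hb * \<tau> * one w) @ [yy])"

definition C_letter :: "nat \<Rightarrow> R \<Rightarrow> letter \<Rightarrow> tens" where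
  "C_letter n \<tau> a = (case a of X \<Rightarrow> C_gen n \<tau> | Y \<Rightarrow> (\<lambda>ws. - C_gen n \<tau> ws))"

primrec C_word :: "nat \<Rightarrow> R \<Rightarrow> word \<Rightarrow> tens" where
  "C_word n \<tau> [] = tens_zero"
| "C_word n \<tau> (a # w) = tens_add (rmod (C_letter n \<tau> a) (gamma_inv_word \<tau> w))
                                   (lmod (gamma_inv_letter \<tau> a) (C_word n \<tau> w))"

definition C_map :: "nat \<Rightarrow> R \<Rightarrow> nc \<Rightarrow> tens" where
  "C_map n \<tau> f = (\<lambda>ws. \<Sum>u\<in>nc_supp f. f u * C_word n \<tau> u ws)"

definition M_map :: "nat \<Rightarrow> tens \<Rightarrow> nc" where
  "M_map n T = (\<lambda>w. \<Sum>ws\<in>{ws. length ws = Suc n \<and> concat ws = w}. T ws)"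

definition rho :: "nat \<Rightarrow> R \<Rightarrow> nc \<Rightarrow> nc" where
  "rho n \<tau> f = M_map n (C_map n \<tau> f)"

end

theory Submission
  imports Defs
begin


abbreviation fin :: "nc \<Rightarrow> bool" where "fin f \<equiv> finite (nc_supp f)"

lemma lin_superset:
  assumes "fin f" "finite A" "nc_supp f \<subseteq> A"
  shows "lin L f w = (\<Sum>u\<in>A. f u * L u w)"
  unfolding lin_def using assms
  by (intro sum.mono_neutral_left) (auto simp: nc_supp_def)

lemma fin_sum:
  assumes "finite A" "\<And>a. a \<in> A \<Longrightarrow> fin (h a)"
  shows "fin (\<lambda>v. \<Sum>a\<in>A. c a * h a v)"
proof -
  have "nc_supp (\<lambda>v. \<Sum>a\<in>A. c a * h a v) \<subseteq> (\<Union>a\<in>A. nc_supp (h a))"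
  proof
    fix v assume "v \<in> nc_supp (\<lambda>v. \<Sum>a\<in>A. c a * h a v)"
    then have "(\<Sum>a\<in>A. c a * h a v) \<noteq> 0" by (simp add: nc_supp_def)
    then obtain a where "a \<in> A" "c a * h a v \<noteq> 0" by (meson sum.neutral)
    then show "v \<in> (\<Union>a\<in>A. nc_supp (h a))" by (auto simp: nc_supp_def)
  qed
  then show ?thesis using assms by (meson finite_UN_I finite_subset)
qed

lemma fin_mono[simp]: "fin (mono u)"
  by (simp add: nc_supp_def mono_def)

lemma fin_add: "fin f \<Longrightarrow> fin g \<Longrightarrow> fin (\<lambda>v. f v + g v)"
  by (rule finite_subset[of _ "nc_supp f \<union> nc_supp g"]) (auto simp: nc_supp_def)

lemma fin_smult: "fin f \<Longrightarrow> fin (\<lambda>v. c * f v)"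
  by (rule finite_subset[of _ "nc_supp f"]) (auto simp: nc_supp_def)

lemma lin_add:
  assumes "fin f" "fin g"
  shows "lin L (\<lambda>v. f v + g v) = (\<lambda>w. lin L f w + lin L g w)"
proof
  fix w
  let ?A = "nc_supp f \<union> nc_supp g"
  have h: "nc_supp (\<lambda>v. f v + g v) \<subseteq> ?A" by (auto simp: nc_supp_def)
  have "lin L (\<lambda>v. f v + g v) w = (\<Sum>u\<in>?A. (f u + g u) * L u w)"
    by (rule lin_superset) (use assms h fin_add in auto)
  also have "\<dots> = (\<Sum>u\<in>?A. f u * L u w) + (\<Sum>u\<in>?A. g u * L u w)"
    by (simp add: distrib_right sum.distrib)
  also have "\<dots> = lin L f w + lin L g w"
    using assms by (simp add: lin_superset[of f ?A] lin_superset[of g ?A])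
  finally show "lin L (\<lambda>v. f v + g v) w = lin L f w + lin L g w" .
qed

lemma lin_smult:
  assumes "fin f"
  shows "lin L (\<lambda>v. c * f v) = (\<lambda>w. c * lin L f w)"
proof
  fix w
  have "lin L (\<lambda>v. c * f v) w = (\<Sum>u\<in>nc_supp f. (c * f u) * L u w)"
    by (rule lin_superset) (use assms fin_smult in \<open>auto simp: nc_supp_def\<close>)
  also have "\<dots> = c * lin L f w" by (simp add: lin_def sum_distrib_left mult.assoc)
  finally show "lin L (\<lambda>v. c * f v) w = c * lin L f w" .
qed

lemma supp_mono: "nc_supp (mono u) = {u}" by (auto simp: nc_supp_def mono_def)

lemma lin_mono[simp]: "lin L (mono u) = L u"
  by (rule ext) (simp add: lin_def supp_mono, simp add: mono_def)

lemma lin_sum: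
  assumes "finite A" "\<And>a. a \<in> A \<Longrightarrow> fin (h a)"
  shows "lin L (\<lambda>v. \<Sum>a\<in>A. c a * h a v) = (\<lambda>w. \<Sum>a\<in>A. c a * lin L (h a) w)"
  using assms
proof (induction A rule: finite_induct)
  case empty
  have "nc_supp (\<lambda>v. \<Sum>a\<in>{}. c a * h a v) = {}" by (simp add: nc_supp_def)
  then show ?case by (simp add: lin_def)
next
  case (insert a A)
  have "lin L (\<lambda>v. \<Sum>a\<in>insert a A. c a * h a v)
      = lin L (\<lambda>v. c a * h a v + (\<Sum>a\<in>A. c a * h a v))"
    using insert by simp
  also have "\<dots> = (\<lambda>w. lin L (\<lambda>v. c a * h a v) w + lin L (\<lambda>v. \<Sum>a\<in>A. c a * h a v) w)"
  proof (rule lin_add)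
    show "fin (\<lambda>v. c a * h a v)" using insert by (intro fin_smult) auto
    show "fin (\<lambda>v. \<Sum>a\<in>A. c a * h a v)" using insert by (intro fin_sum) auto
  qed
  also have "\<dots> = (\<lambda>w. \<Sum>a\<in>insert a A. c a * lin L (h a) w)"
  proof -
    have "lin L (\<lambda>v. c a * h a v) = (\<lambda>w. c a * lin L (h a) w)"
      by (rule lin_smult) (use insert in auto)
    moreover have "lin L (\<lambda>v. \<Sum>a\<in>A. c a * h a v) = (\<lambda>w. \<Sum>a\<in>A. c a * lin L (h a) w)"
      by (rule insert.IH) (use insert.prems in auto)
    ultimately show ?thesis using insert.hyps by simp
  qed
  finally show ?case .
qed

lemma expand: assumes "fin f" shows "f = (\<lambda>v. \<Sum>u\<in>nc_supp f. f u * mono u v)"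
proof (rule ext)
  fix v
  have "(\<Sum>u\<in>nc_supp f. f u * mono u v) = (\<Sum>u\<in>nc_supp f. if u = v then f v else 0)"
    by (rule sum.cong) (auto simp: mono_def)
  also have "\<dots> = f v" using assms by (cases "f v = 0") (simp_all add: nc_supp_def)
  finally show "f v = (\<Sum>u\<in>nc_supp f. f u * mono u v)" by simp
qed

lemma lin_comp:
  assumes "fin f" "\<And>u. fin (R u)"
  shows "lin L (lin R f) = lin (\<lambda>u. lin L (R u)) f"
proof -
  have "lin R f = (\<lambda>w. \<Sum>u\<in>nc_supp f. f u * R u w)" by (simp add: lin_def)
  then have "lin L (lin R f) = (\<lambda>w. \<Sum>u\<in>nc_supp f. f u * lin L (R u) w)"
    using lin_sum[OF assms(1), where h=R and c=f and L=L] assms(2) by simp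
  then show ?thesis by (simp add: lin_def[of "\<lambda>u. lin L (R u)"])
qed

lemma lin_cong: "(\<And>u. u \<in> nc_supp f \<Longrightarrow> L u = L' u) \<Longrightarrow> lin L f = lin L' f"
  unfolding lin_def by (intro ext sum.cong refl) simp

lemma fin_lin: "fin f \<Longrightarrow> (\<And>u. fin (L u)) \<Longrightarrow> fin (lin L f)"
  unfolding lin_def by (rule fin_sum) auto



lemma mult_Nil[simp]: "nc_mult f g [] = f [] * g []"
  by (simp add: nc_mult_def)

lemma mult_Cons: "nc_mult f g (a # w) = f [] * g (a # w) + nc_mult (\<lambda>u. f (a # u)) g w"
  unfolding nc_mult_def length_Cons sum.atMost_Suc_shift
  by simp

lemma mult_lin_left: "nc_mult (\<lambda>v. c * f v + f' v) h = (\<lambda>w. c * nc_mult f h w + nc_mult f' h w)"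
  unfolding nc_mult_def
  by (simp add: algebra_simps sum.distrib sum_distrib_left)

lemma mult_lin_right: "nc_mult h (\<lambda>v. c * f v + f' v) = (\<lambda>w. c * nc_mult h f w + nc_mult h f' w)"
  unfolding nc_mult_def
  by (simp add: algebra_simps sum.distrib sum_distrib_left)

lemma mult_sum_left: "nc_mult (\<lambda>v. \<Sum>a\<in>A. c a * h a v) g = (\<lambda>w. \<Sum>a\<in>A. c a * nc_mult (h a) g w)"
  unfolding nc_mult_def
  by (simp add: sum_distrib_left sum_distrib_right mult.assoc sum.swap[of _ A])

lemma mult_sum_right: "nc_mult g (\<lambda>v. \<Sum>a\<in>A. c a * h a v) = (\<lambda>w. \<Sum>a\<in>A. c a * nc_mult g (h a) w)"
  unfolding nc_mult_def
  by (simp add: sum_distrib_left sum_distrib_right mult.left_commute sum.swap[of _ A])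

lemma mult_assoc: "nc_mult (nc_mult f g) h = nc_mult f (nc_mult g h)"
proof (rule ext)
  fix w show "nc_mult (nc_mult f g) h w = nc_mult f (nc_mult g h) w"
  proof (induction w arbitrary: f)
    case Nil
    then show ?case by (simp add: mult.assoc)
  next
    case (Cons a w)
    have e: "(\<lambda>u. nc_mult f g (a # u)) = (\<lambda>u. f [] * g (a # u) + nc_mult (\<lambda>u. f (a # u)) g u)"
      by (simp add: mult_Cons)
    have "nc_mult (nc_mult f g) h (a # w)
       = f [] * g [] * h (a # w) + (f [] * nc_mult (\<lambda>u. g (a # u)) h w
          + nc_mult (nc_mult (\<lambda>u. f (a # u)) g) h w)"
      by (simp add: mult_Cons[of "nc_mult f g"] e mult_lin_left)
    also have "\<dots> = f [] * g [] * h (a # w) + (f [] * nc_mult (\<lambda>u. g (a # u)) h w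
          + nc_mult (\<lambda>u. f (a # u)) (nc_mult g h) w)"
      by (simp add: Cons.IH)
    also have "\<dots> = nc_mult f (nc_mult g h) (a # w)"
      by (simp add: mult_Cons[of f] mult_Cons[of g] algebra_simps)
    finally show ?case .
  qed
qed

lemma mult_mono_left: "nc_mult (mono u) g = (\<lambda>w. if take (length u) w = u then g (drop (length u) w) else 0)"
proof (rule ext)
  fix w
  have "nc_mult (mono u) g w = (\<Sum>i\<le>length w. if i = length u then (if take (length u) w = u then g (drop (length u) w) else 0) else 0)"
    unfolding nc_mult_def mono_def
    by (rule sum.cong) auto
  also have "\<dots> = (if take (length u) w = u then g (drop (length u) w) else 0)"
    by (auto dest: arg_cong[of _ _ length])
  finally show "nc_mult (mono u) g w = (if take (length u) w = u then g (drop (length u) w) else 0)" .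
qed

lemma mono_mult[simp]: "nc_mult (mono u) (mono v) = mono (u @ v)"
  unfolding mult_mono_left
proof (rule ext)
  fix w
  have "(u @ v = w) = (u = take (length u) w \<and> v = drop (length u) w)" by (rule append_eq_conv_conj)
  then show "(if take (length u) w = u then mono v (drop (length u) w) else 0) = mono (u @ v) w"
    by (auto simp: mono_def)
qed

lemma one_mult[simp]: "nc_mult one g = g"
  unfolding one_def by (rule ext) (simp add: mult_mono_left)

lemma mult_one[simp]: "nc_mult f one = f"
proof (rule ext)
  fix w
  have "nc_mult f one w = (\<Sum>i\<le>length w. if i = length w then f w else 0)"
    unfolding nc_mult_def one_def mono_def
    by (rule sum.cong) auto
  then show "nc_mult f one w = f w" by simp
qed

lemma fin_mult: assumes "fin f" "fin g" shows "fin (nc_mult f g)"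
proof -
  have "nc_mult f g = nc_mult (\<lambda>v. \<Sum>u\<in>nc_supp f. f u * mono u v) (\<lambda>v. \<Sum>u\<in>nc_supp g. g u * mono u v)"
    using expand[OF assms(1)] expand[OF assms(2)] by simp
  also have "\<dots> = (\<lambda>w. \<Sum>a\<in>nc_supp f. f a * (\<Sum>b\<in>nc_supp g. g b * mono (a @ b) w))"
    by (simp add: mult_sum_left mult_sum_right)
  finally show ?thesis using assms by (simp add: fin_sum)
qed



lemma mult_add_left: "nc_mult (\<lambda>v. f v + f' v) h = (\<lambda>w. nc_mult f h w + nc_mult f' h w)"
  using mult_lin_left[of 1 f f' h] by simp
lemma mult_add_right: "nc_mult h (\<lambda>v. f v + f' v) = (\<lambda>w. nc_mult h f w + nc_mult h f' w)"
  using mult_lin_right[of h 1 f f'] by simp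
lemma mult_smult_left: "nc_mult (\<lambda>v. c * f v) h = (\<lambda>w. c * nc_mult f h w)"
  using mult_lin_left[of c f "\<lambda>_. 0" h] by (simp add: nc_mult_def)
lemma mult_smult_right: "nc_mult h (\<lambda>v. c * f v) = (\<lambda>w. c * nc_mult h f w)"
  using mult_lin_right[of h c f "\<lambda>_. 0"] by (simp add: nc_mult_def)
lemma mult_diff_left: "nc_mult (\<lambda>v. f v - f' v) h = (\<lambda>w. nc_mult f h w - nc_mult f' h w)"
  using mult_lin_left[of "-1" f' f h] by (simp add: algebra_simps)
lemma mult_diff_right: "nc_mult h (\<lambda>v. f v - f' v) = (\<lambda>w. nc_mult h f w - nc_mult h f' w)"
  using mult_lin_right[of h "-1" f' f] by (simp add: algebra_simps)

lemmas mult_lin_simps = mult_add_left mult_add_right mult_smult_left mult_smult_right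
  mult_diff_left mult_diff_right

lemma mult_expand:
  assumes "fin f" "fin g"
  shows "nc_mult f g = (\<lambda>w. \<Sum>a\<in>nc_supp f. f a * (\<Sum>b\<in>nc_supp g. g b * mono (a @ b) w))"
proof -
  have "nc_mult f g = nc_mult (\<lambda>v. \<Sum>u\<in>nc_supp f. f u * mono u v) (\<lambda>v. \<Sum>u\<in>nc_supp g. g u * mono u v)"
    using expand[OF assms(1)] expand[OF assms(2)] by simp
  also have "\<dots> = (\<lambda>w. \<Sum>a\<in>nc_supp f. f a * (\<Sum>b\<in>nc_supp g. g b * mono (a @ b) w))"
    by (simp add: mult_sum_left mult_sum_right)
  finally show ?thesis .
qed

lemma mult_yy_expand:
  assumes "fin f"
  shows "nc_mult f yy = (\<lambda>w. \<Sum>a\<in>nc_supp f. f a * mono (a @ [Y]) w)"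
proof -
  have "nc_mult f yy = nc_mult (\<lambda>v. \<Sum>u\<in>nc_supp f. f u * mono u v) yy"
    using expand[OF assms(1)] by simp
  then show ?thesis by (simp add: mult_sum_left yy_def)
qed

definition gamma_letter :: "letter \<Rightarrow> nc" where
  "gamma_letter a = (case a of X \<Rightarrow> xx | Y \<Rightarrow> (\<lambda>w. yy w + tt * xx w + (hb * tt) * one w))"

definition gamma_word :: "word \<Rightarrow> nc" where
  "gamma_word u = foldr (\<lambda>a acc. nc_mult (gamma_letter a) acc) u one"

definition G :: "nc \<Rightarrow> nc" where "G f = lin gamma_word f"

lemma gamma_word_Nil[simp]: "gamma_word [] = one" by (simp add: gamma_word_def)
lemma gamma_word_Cons[simp]: "gamma_word (a # u) = nc_mult (gamma_letter a) (gamma_word u)"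
  by (simp add: gamma_word_def)

lemma gamma_word_append: "gamma_word (u @ v) = nc_mult (gamma_word u) (gamma_word v)"
  by (induction u) (simp_all add: mult_assoc)

lemma fin_xx[simp]: "fin xx" and fin_yy[simp]: "fin yy" and fin_one[simp]: "fin one"
  by (simp_all add: xx_def yy_def one_def)

lemma fin_gamma_letter: "fin (gamma_letter a)"
  by (cases a) (simp_all add: gamma_letter_def fin_add fin_smult)

lemma fin_gamma_word: "fin (gamma_word u)"
  by (induction u) (simp_all add: fin_mult fin_gamma_letter)

lemma G_mult:
  assumes "fin f" "fin g"
  shows "G (nc_mult f g) = nc_mult (G f) (G g)"
proof -
  have inner: "lin gamma_word (\<lambda>w. \<Sum>b\<in>nc_supp g. g b * mono (a @ b) w)
      = nc_mult (gamma_word a) (G g)" for a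
  proof -
    have "lin gamma_word (\<lambda>w. \<Sum>b\<in>nc_supp g. g b * mono (a @ b) w)
        = (\<lambda>w. \<Sum>b\<in>nc_supp g. g b * gamma_word (a @ b) w)"
      using lin_sum[of "nc_supp g" "\<lambda>b. mono (a @ b)" gamma_word g] assms by simp
    also have "\<dots> = nc_mult (gamma_word a) (\<lambda>w. \<Sum>b\<in>nc_supp g. g b * gamma_word b w)"
      by (simp add: mult_sum_right gamma_word_append)
    also have "\<dots> = nc_mult (gamma_word a) (G g)"
      by (simp add: G_def lin_def)
    finally show ?thesis .
  qed
  have "G (nc_mult f g) = (\<lambda>w. \<Sum>a\<in>nc_supp f. f a * lin gamma_word (\<lambda>w. \<Sum>b\<in>nc_supp g. g b * mono (a @ b) w) w)"
    unfolding mult_expand[OF assms] G_def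
    by (rule lin_sum) (use assms in \<open>auto intro: fin_sum\<close>)
  also have "\<dots> = (\<lambda>w. \<Sum>a\<in>nc_supp f. f a * nc_mult (gamma_word a) (G g) w)"
    by (simp add: inner)
  also have "\<dots> = nc_mult (\<lambda>w. \<Sum>a\<in>nc_supp f. f a * gamma_word a w) (G g)"
    by (simp add: mult_sum_left)
  also have "\<dots> = nc_mult (G f) (G g)"
    by (simp add: G_def lin_def)
  finally show ?thesis .
qed

lemma circ_aux_Y:
  "Y \<in> set u \<Longrightarrow> circ_aux (Suc j) k u
     = (\<lambda>v. hb * mono (replicate (j + k) X @ u) v + mono (replicate (Suc (j + k)) X @ u) v)"
proof (induction u arbitrary: k)
  case Nil
  then show ?case by simp
next
  case (Cons a u)
  show ?case
  proof (cases a)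
    case X
    then have "Y \<in> set u" using Cons.prems by simp
    then show ?thesis using Cons.IH[of "Suc k"] X by (simp add: replicate_app_Cons_same)
  next
    case Y
    then show ?thesis by (rule_tac ext) (simp add: zw_def nc_add_def nc_smult_def add.commute)
  qed
qed

lemma circ_mult_yy:
  assumes "fin F"
  shows "circ (Suc j) (nc_mult F yy)
     = nc_mult (\<lambda>v. hb * mono (replicate j X) v + mono (replicate (Suc j) X) v) (nc_mult F yy)"
proof -
  have "circ (Suc j) (nc_mult F yy) = (\<lambda>w. \<Sum>a\<in>nc_supp F. F a * circ_aux (Suc j) 0 (a @ [Y]) w)"
    unfolding circ_def mult_yy_expand[OF assms]
    using lin_sum[of "nc_supp F" "\<lambda>a. mono (a @ [Y])" "circ_aux (Suc j) 0" F] assms by simp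
  also have "\<dots> = (\<lambda>w. \<Sum>a\<in>nc_supp F. F a * (hb * mono (replicate j X @ a @ [Y]) w + mono (replicate (Suc j) X @ a @ [Y]) w))"
    by (simp add: circ_aux_Y)
  also have "\<dots> = nc_mult (\<lambda>v. hb * mono (replicate j X) v + mono (replicate (Suc j) X) v) (nc_mult F yy)"
    unfolding mult_yy_expand[OF assms]
    by (simp add: mult_sum_right mult_lin_simps)
  finally show ?thesis .
qed

lemma S_aux_Y:
  "S_aux tt k (u @ [Y]) = nc_mult (mono (replicate k X)) (nc_mult (gamma_word u) yy)"
proof (induction u arbitrary: k)
  case Nil
  have c: "circ (Suc k) one = nc_zero"
    by (simp add: circ_def one_def)
  have "S_aux tt k ([] @ [Y]) = nc_add (nc_mult (mono (zw (Suc k))) one) (nc_smult tt (circ (Suc k) one))"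
    by simp
  also have "\<dots> = mono (zw (Suc k))"
    unfolding c mult_one by (rule ext) (simp add: nc_add_def nc_smult_def nc_zero_def)
  also have "\<dots> = nc_mult (mono (replicate k X)) (nc_mult (gamma_word []) yy)"
    by (simp add: zw_def yy_def)
  finally show ?case .
next
  case (Cons a u)
  show ?case
  proof (cases a)
    case X
    have "S_aux tt k ((a # u) @ [Y]) = nc_mult (mono (replicate (Suc k) X)) (nc_mult (gamma_word u) yy)"
      using Cons.IH[of "Suc k"] X by simp
    also have "\<dots> = nc_mult (mono (replicate k X)) (nc_mult (gamma_word (a # u)) yy)"
      using X by (simp add: mult_assoc[symmetric] gamma_letter_def xx_def replicate_append_same)
    finally show ?thesis .
  next
    case Y
    define Q where "Q = nc_mult (gamma_word u) yy"
    have S0: "S_aux tt 0 (u @ [Y]) = Q"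
      using Cons.IH[of 0] by (simp add: Q_def one_def[symmetric])
    have fQ: "fin Q" by (simp add: Q_def fin_mult fin_gamma_word)
    have cQ: "circ (Suc k) Q = nc_mult (\<lambda>v. hb * mono (replicate k X) v + mono (replicate (Suc k) X) v) Q"
      unfolding Q_def by (rule circ_mult_yy) (simp add: fin_gamma_word)
    have "S_aux tt k ((a # u) @ [Y]) = (\<lambda>w. nc_mult (mono (replicate k X @ [Y])) Q w
           + tt * nc_mult (\<lambda>v. hb * mono (replicate k X) v + mono (replicate (Suc k) X) v) Q w)"
      using Y by (simp add: S0 cQ nc_add_def nc_smult_def zw_def)
    also have "\<dots> = nc_mult (nc_mult (mono (replicate k X)) (gamma_letter Y)) Q"
    proof -
      have g: "nc_mult (mono (replicate k X)) (gamma_letter Y)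
         = (\<lambda>w. mono (replicate k X @ [Y]) w + tt * mono (replicate k X @ [X]) w + (hb * tt) * mono (replicate k X) w)"
        by (simp add: gamma_letter_def mult_lin_simps xx_def yy_def one_def)
      show ?thesis unfolding g
        by (rule ext) (simp add: mult_lin_simps replicate_append_same algebra_simps)
    qed
    also have "\<dots> = nc_mult (mono (replicate k X)) (nc_mult (gamma_word (a # u)) yy)"
      using Y by (simp add: Q_def mult_assoc)
    finally show ?thesis .
  qed
qed

lemma S_mult_yy:
  assumes "fin F"
  shows "S_map tt (nc_mult F yy) = nc_mult (G F) yy"
proof -
  have "S_map tt (nc_mult F yy) = (\<lambda>w. \<Sum>a\<in>nc_supp F. F a * S_aux tt 0 (a @ [Y]) w)"
    unfolding S_map_def mult_yy_expand[OF assms]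
    using lin_sum[of "nc_supp F" "\<lambda>a. mono (a @ [Y])" "S_aux tt 0" F] assms by simp
  also have "\<dots> = (\<lambda>w. \<Sum>a\<in>nc_supp F. F a * nc_mult (gamma_word a) yy w)"
    by (simp add: S_aux_Y one_def[symmetric])
  also have "\<dots> = nc_mult (G F) yy"
    by (simp add: G_def lin_def mult_sum_left)
  finally show ?thesis .
qed



primrec prodl :: "nc list \<Rightarrow> nc" where
  "prodl [] = one"
| "prodl (f # fs) = nc_mult f (prodl fs)"

lemma prodl_append: "prodl (xs @ ys) = nc_mult (prodl xs) (prodl ys)"
  by (induction xs) (simp_all add: mult_assoc)

lemma tens_of_Cons: "tens_of (f # fs) (v # r) = f v * tens_of fs r"
  unfolding tens_of_def length_Cons prod.lessThan_Suc_shift by simp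

lemma tens_of_Cons_Nil: "tens_of (f # fs) [] = 0"
  unfolding tens_of_def by simp

lemma tens_of_Nil_Nil: "tens_of [] [] = 1"
  unfolding tens_of_def by simp

lemma tens_of_Nil_Cons: "tens_of [] (v # r) = 0"
  unfolding tens_of_def by simp

lemma tens_of_Nil: "tens_of [] ws = (if ws = [] then 1 else 0)"
  unfolding tens_of_def by simp

lemma tens_of_snoc_Nil: "tens_of (fs @ [f]) [] = 0"
  unfolding tens_of_def by simp

lemma tens_of_snoc: "tens_of (fs @ [f]) (ws @ [v]) = tens_of fs ws * f v"
proof (induction fs arbitrary: ws)
  case Nil
  then show ?case by (cases ws) (simp_all add: tens_of_Cons tens_of_Nil tens_of_Cons_Nil)
next
  case (Cons g fs)
  then show ?case
    by (cases ws) (simp_all add: tens_of_Cons tens_of_Cons_Nil tens_of_snoc_Nil)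
qed


lemma rmod_tens_of: "rmod (tens_of (f # fs)) b = tens_of (nc_mult f b # fs)"
proof (rule ext)
  fix ws show "rmod (tens_of (f # fs)) b ws = tens_of (nc_mult f b # fs) ws"
  proof (cases ws)
    case Nil
    then show ?thesis by (simp add: rmod_def tens_of_Cons_Nil)
  next
    case (Cons w1 rest)
    then show ?thesis
      by (simp add: rmod_def tens_of_Cons nc_mult_def sum_distrib_right sum_distrib_left algebra_simps)
  qed
qed

lemma lmod_tens_of: "lmod a (tens_of (fs @ [f])) = tens_of (fs @ [nc_mult a f])"
proof (rule ext)
  fix ws show "lmod a (tens_of (fs @ [f])) ws = tens_of (fs @ [nc_mult a f]) ws"
  proof (cases ws rule: rev_cases)
    case Nil
    then show ?thesis by (simp add: lmod_def tens_of_snoc_Nil)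
  next
    case (snoc ws' l)
    then show ?thesis
      by (simp add: lmod_def tens_of_snoc nc_mult_def sum_distrib_left sum_distrib_right algebra_simps)
  qed
qed

lemma rmod_sum: "rmod (\<lambda>ws. \<Sum>k\<in>K. c k * T k ws) b = (\<lambda>ws. \<Sum>k\<in>K. c k * rmod (T k) b ws)"
  by (rule ext) (simp add: rmod_def sum_distrib_left sum_distrib_right mult.assoc sum.swap[of _ K] split: list.split)

lemma rmod_smult: "rmod (\<lambda>ws. c * T ws) b = (\<lambda>ws. c * rmod T b ws)"
  by (rule ext) (simp add: rmod_def sum_distrib_left mult.assoc split: list.split)

lemma lmod_sum: "lmod a (\<lambda>ws. \<Sum>k\<in>K. c k * T k ws) = (\<lambda>ws. \<Sum>k\<in>K. c k * lmod a (T k) ws)"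
  by (rule ext) (simp add: lmod_def sum_distrib_left mult.left_commute sum.swap[of _ K])

lemma M_sum: "M_map n (\<lambda>ws. \<Sum>k\<in>K. c k * T k ws) = (\<lambda>w. \<Sum>k\<in>K. c k * M_map n (T k) w)"
  by (rule ext) (simp add: M_map_def sum_distrib_left sum.swap[of _ K])

lemma split_set:
  "{ws. length ws = Suc m \<and> concat ws = w}
   = (\<lambda>(i, r). take i w # r) ` (SIGMA i:{..length w}. {r. length r = m \<and> concat r = drop i w})"
proof (rule set_eqI, rule iffI)
  fix ws assume "ws \<in> {ws. length ws = Suc m \<and> concat ws = w}"
  then obtain v r where ws: "ws = v # r" "length r = m" "v @ concat r = w"
    by (cases ws) auto
  then have "v = take (length v) w" "concat r = drop (length v) w" "length v \<le> length w" by auto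
  then show "ws \<in> (\<lambda>(i, r). take i w # r) ` (SIGMA i:{..length w}. {r. length r = m \<and> concat r = drop i w})"
    using ws by (intro image_eqI[of _ _ "(length v, r)"]) auto
next
  fix ws assume "ws \<in> (\<lambda>(i, r). take i w # r) ` (SIGMA i:{..length w}. {r. length r = m \<and> concat r = drop i w})"
  then show "ws \<in> {ws. length ws = Suc m \<and> concat ws = w}" by auto
qed

lemma split_inj: "inj_on (\<lambda>(i, r). take i w # r) (SIGMA i:{..length w}. {r. length r = m \<and> concat r = drop i w})"
proof (rule inj_onI)
  fix p q assume "p \<in> (SIGMA i:{..length w}. {r. length r = m \<and> concat r = drop i w})"
    "q \<in> (SIGMA i:{..length w}. {r. length r = m \<and> concat r = drop i w})"
    "(\<lambda>(i, r). take i w # r) p = (\<lambda>(i, r). take i w # r) q"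
  then show "p = q"
    by (cases p, cases q) (auto dest: arg_cong[of _ _ length])
qed

lemma finite_split: "finite {ws. length ws = m \<and> concat ws = w}"
proof (induction m arbitrary: w)
  case 0
  have "{ws. length ws = 0 \<and> concat ws = w} \<subseteq> {[]}" by auto
  then show ?case using finite_subset by blast
next
  case (Suc m)
  show ?case unfolding split_set using Suc.IH by auto
qed

lemma M_tens_of_gen: "(\<lambda>w. \<Sum>ws\<in>{ws. length ws = length fs \<and> concat ws = w}. tens_of fs ws) = prodl fs"
proof (induction fs)
  case Nil
  show ?case
  proof (rule ext)
    fix w :: word
    have "{ws. length ws = length ([]::nc list) \<and> concat ws = w} = (if w = [] then {[]} else {})"
      by auto
    then show "(\<Sum>ws\<in>{ws. length ws = length ([]::nc list) \<and> concat ws = w}. tens_of [] ws) = prodl [] w"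
      by (simp add: tens_of_Nil_Nil one_def mono_def)
  qed
next
  case (Cons f fs)
  show ?case
  proof (rule ext)
    fix w :: word
    let ?S = "SIGMA i:{..length w}. {r. length r = length fs \<and> concat r = drop i w}"
    have "(\<Sum>ws\<in>{ws. length ws = length (f # fs) \<and> concat ws = w}. tens_of (f # fs) ws)
        = (\<Sum>p\<in>?S. tens_of (f # fs) ((\<lambda>(i, r). take i w # r) p))"
      unfolding length_Cons split_set by (rule sum.reindex[OF split_inj, unfolded comp_def])
    also have "\<dots> = (\<Sum>i\<le>length w. \<Sum>r\<in>{r. length r = length fs \<and> concat r = drop i w}. f (take i w) * tens_of fs r)"
      by (subst sum.Sigma) (auto simp: finite_split tens_of_Cons split_def)
    also have "\<dots> = (\<Sum>i\<le>length w. f (take i w) * prodl fs (drop i w))"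
      by (simp add: sum_distrib_left[symmetric] Cons.IH[THEN fun_cong, symmetric])
    also have "\<dots> = prodl (f # fs) w" by (simp add: nc_mult_def)
    finally show "(\<Sum>ws\<in>{ws. length ws = length (f # fs) \<and> concat ws = w}. tens_of (f # fs) ws) = prodl (f # fs) w" .
  qed
qed

lemma M_tens_of: "length fs = Suc n \<Longrightarrow> M_map n (tens_of fs) = prodl fs"
  unfolding M_map_def using M_tens_of_gen[of fs] by simp



definition sg :: "letter \<Rightarrow> R" where "sg a = (case a of X \<Rightarrow> 1 | Y \<Rightarrow> -1)"

definition mid :: "R \<Rightarrow> nc" where "mid \<tau> = (\<lambda>w. (1 - \<tau>) * xx w + yy w - hb * \<tau> * one w)"

definition Tk :: "nat \<Rightarrow> R \<Rightarrow> word \<Rightarrow> nat \<Rightarrow> tens" where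
  "Tk n \<tau> u k = tens_of ([nc_mult xx (gamma_inv_word \<tau> (drop (Suc k) u))] @ replicate (n - 1) (mid \<tau>)
      @ [nc_mult (gamma_inv_word \<tau> (take k u)) yy])"

lemma giw_Nil[simp]: "gamma_inv_word \<tau> [] = one" by (simp add: gamma_inv_word_def)
lemma giw_Cons[simp]: "gamma_inv_word \<tau> (a # u) = nc_mult (gamma_inv_letter \<tau> a) (gamma_inv_word \<tau> u)"
  by (simp add: gamma_inv_word_def)

lemma C_letter_eq: "C_letter n \<tau> a = (\<lambda>ws. sg a * tens_of (xx # (replicate (n - 1) (mid \<tau>) @ [yy])) ws)"
  by (cases a) (simp_all add: C_letter_def sg_def C_gen_def mid_def)

lemma C_word_formula: "C_word n \<tau> u = (\<lambda>ws. \<Sum>k<length u. sg (u ! k) * Tk n \<tau> u k ws)"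
proof (induction u)
  case Nil
  then show ?case by (simp add: tens_zero_def)
next
  case (Cons a u)
  have r: "rmod (C_letter n \<tau> a) (gamma_inv_word \<tau> u) = (\<lambda>ws. sg a * Tk n \<tau> (a # u) 0 ws)"
    unfolding C_letter_eq rmod_smult rmod_tens_of by (simp add: Tk_def)
  have l: "lmod (gamma_inv_letter \<tau> a) (Tk n \<tau> u k) = Tk n \<tau> (a # u) (Suc k)" for k
  proof -
    have "lmod (gamma_inv_letter \<tau> a) (Tk n \<tau> u k)
      = lmod (gamma_inv_letter \<tau> a) (tens_of (([nc_mult xx (gamma_inv_word \<tau> (drop (Suc k) u))] @ replicate (n - 1) (mid \<tau>))
      @ [nc_mult (gamma_inv_word \<tau> (take k u)) yy]))" by (simp add: Tk_def)
    also have "\<dots> = Tk n \<tau> (a # u) (Suc k)"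
      unfolding lmod_tens_of by (simp add: Tk_def mult_assoc)
    finally show ?thesis .
  qed
  have "C_word n \<tau> (a # u) = (\<lambda>ws. sg a * Tk n \<tau> (a # u) 0 ws + (\<Sum>k<length u. sg (u ! k) * Tk n \<tau> (a # u) (Suc k) ws))"
    by (simp only: C_word.simps Cons.IH tens_add_def r lmod_sum l)
  also have "\<dots> = (\<lambda>ws. \<Sum>k<length (a # u). sg ((a # u) ! k) * Tk n \<tau> (a # u) k ws)"
  proof (rule ext)
    fix ws
    show "sg a * Tk n \<tau> (a # u) 0 ws + (\<Sum>k<length u. sg (u ! k) * Tk n \<tau> (a # u) (Suc k) ws)
       = (\<Sum>k<length (a # u). sg ((a # u) ! k) * Tk n \<tau> (a # u) k ws)"
      using sum.lessThan_Suc_shift[of "\<lambda>k. sg ((a # u) ! k) * Tk n \<tau> (a # u) k ws" "length u"]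
      by simp
  qed
  finally show ?case .
qed

definition Fk :: "nat \<Rightarrow> R \<Rightarrow> word \<Rightarrow> nat \<Rightarrow> nc" where
  "Fk n \<tau> u k = nc_mult xx (nc_mult (gamma_inv_word \<tau> (drop (Suc k) u))
      (nc_mult (prodl (replicate (n - 1) (mid \<tau>))) (gamma_inv_word \<tau> (take k u))))"

lemma M_Tk: "n \<ge> 1 \<Longrightarrow> M_map n (Tk n \<tau> u k) = nc_mult (Fk n \<tau> u k) yy"
  unfolding Tk_def by (subst M_tens_of) (simp_all add: prodl_append Fk_def mult_assoc)

definition Rw :: "nat \<Rightarrow> R \<Rightarrow> word \<Rightarrow> nc" where "Rw n \<tau> u = M_map n (C_word n \<tau> u)"

lemma Rw_formula: "n \<ge> 1 \<Longrightarrow> Rw n \<tau> u = (\<lambda>w. \<Sum>k<length u. sg (u ! k) * nc_mult (Fk n \<tau> u k) yy w)"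
  unfolding Rw_def C_word_formula M_sum by (simp add: M_Tk)

lemma rho_lin: "rho n \<tau> f = lin (Rw n \<tau>) f"
  by (rule ext) (simp add: rho_def M_map_def C_map_def lin_def Rw_def sum_distrib_left sum.swap[of _ "nc_supp f"])

lemma fin_diff: "fin f \<Longrightarrow> fin g \<Longrightarrow> fin (\<lambda>v. f v - g v)"
  by (rule finite_subset[of _ "nc_supp f \<union> nc_supp g"]) (auto simp: nc_supp_def)

lemma fin_gil: "fin (gamma_inv_letter \<tau> a)"
proof (cases a)
  case X then show ?thesis by (simp add: gamma_inv_letter_def)
next
  case Y then show ?thesis unfolding gamma_inv_letter_def
    by simp (intro fin_diff fin_smult fin_xx fin_yy fin_one)
qed



lemma lin_diff:
  assumes "fin f" "fin g"
  shows "lin L (\<lambda>v. f v - g v) = (\<lambda>w. lin L f w - lin L g w)"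
proof -
  have e: "(\<lambda>v. f v - g v) = (\<lambda>v. f v + (-1) * g v)" by (rule ext) simp
  have "lin L (\<lambda>v. f v + (-1) * g v) = (\<lambda>w. lin L f w + lin L (\<lambda>v. (-1) * g v) w)"
    by (rule lin_add) (use assms in \<open>simp_all only: fin_smult\<close>)
  also have "\<dots> = (\<lambda>w. lin L f w + (-1) * lin L g w)"
    by (simp only: lin_smult[OF assms(2)])
  finally show ?thesis unfolding e by simp
qed

lemma G_xx: "G xx = xx" by (simp add: G_def xx_def gamma_letter_def)
lemma G_yy: "G yy = gamma_letter Y" by (simp add: G_def yy_def)
lemma G_one: "G one = one" by (simp add: G_def one_def)

lemma G_gil: "G (gamma_inv_letter tt a) = gamma_inv_letter 0 a"
proof (cases a)
  case X then show ?thesis by (simp add: gamma_inv_letter_def G_xx)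
next
  case Y
  have "G (gamma_inv_letter tt a) = (\<lambda>w. G yy w - tt * G xx w - (hb * tt) * G one w)"
    unfolding Y gamma_inv_letter_def G_def
    by (simp add: lin_diff lin_smult fin_diff fin_smult)
  also have "\<dots> = gamma_inv_letter 0 a"
    unfolding G_xx G_yy G_one using Y
    by (rule_tac ext) (simp add: gamma_letter_def gamma_inv_letter_def algebra_simps)
  finally show ?thesis .
qed

lemma fin_giw: "fin (gamma_inv_word \<tau> v)"
  by (induction v) (simp_all add: fin_mult fin_gil)

lemma G_giw: "G (gamma_inv_word tt v) = gamma_inv_word 0 v"
  by (induction v) (simp_all add: G_mult fin_gil fin_giw G_gil G_one)

lemma fin_mid: "fin (mid \<tau>)"
  unfolding mid_def by (intro fin_diff fin_add fin_smult fin_xx fin_yy fin_one)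

lemma G_mid: "G (mid tt) = mid 0"
proof -
  have "G (mid tt) = (\<lambda>w. (1 - tt) * G xx w + G yy w - (hb * tt) * G one w)"
    unfolding mid_def G_def
    by (simp add: lin_diff lin_add lin_smult fin_diff fin_add fin_smult)
  also have "\<dots> = mid 0"
    unfolding G_xx G_yy G_one
    by (rule ext) (simp add: gamma_letter_def mid_def algebra_simps)
  finally show ?thesis .
qed

lemma fin_prodl_rep: "fin (prodl (replicate m (mid \<tau>)))"
  by (induction m) (simp_all add: fin_mult fin_mid)

lemma G_prodl_rep: "G (prodl (replicate m (mid tt))) = prodl (replicate m (mid 0))"
  by (induction m) (simp_all add: G_mult fin_mid fin_prodl_rep G_mid G_one)

lemma fin_Fk: "fin (Fk n \<tau> u k)"
  unfolding Fk_def by (simp add: fin_mult fin_giw fin_prodl_rep)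

lemma G_Fk: "G (Fk n tt u k) = Fk n 0 u k"
  unfolding Fk_def
  by (simp add: G_mult fin_mult fin_giw fin_prodl_rep G_xx G_giw G_prodl_rep)

lemma fin_Rw: "n \<ge> 1 \<Longrightarrow> fin (Rw n \<tau> u)"
  unfolding Rw_formula by (rule fin_sum) (simp_all add: fin_mult fin_Fk)

lemma S_Rw:
  assumes "n \<ge> 1"
  shows "S_map tt (Rw n tt u) = Rw n 0 u"
proof -
  have "S_map tt (Rw n tt u) = (\<lambda>w. \<Sum>k<length u. sg (u ! k) * S_map tt (nc_mult (Fk n tt u k) yy) w)"
    unfolding Rw_formula[OF assms] S_map_def
    by (rule lin_sum) (simp_all add: fin_mult fin_Fk)
  also have "\<dots> = Rw n 0 u"
    unfolding Rw_formula[OF assms] by (simp add: S_mult_yy fin_Fk G_Fk)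
  finally show ?thesis .
qed

theorem lemma3p1:
  fixes n :: nat and w :: nc
  assumes "n \<ge> 1" and "finite (nc_supp w)"
  shows "S_map tt (rho n tt w) = rho n 0 w"
proof -
  have "S_map tt (rho n tt w) = lin (\<lambda>u. S_map tt (Rw n tt u)) w"
    unfolding rho_lin S_map_def
    by (rule lin_comp) (use assms fin_Rw in auto)
  also have "\<dots> = lin (Rw n 0) w"
    by (rule lin_cong) (rule S_Rw[OF assms(1)])
  also have "\<dots> = rho n 0 w" by (simp add: rho_lin)
  finally show ?thesis .
qed

end
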